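(* Consider a generalized Nash equilibrium problem with $N$ players in which the $i$th player, given the other players' strategies $x_{-i}$, solves \[ \min_{x_i\in\mathbb{R}^{n_i}} f_i(x_i,x_{-i})\quad\text{s.t.}\quad g_i(x_i,x_{-i})\ge 0, \] where $f_i$ and the components of $g_i=(g_{i,1},\dots,g_{i,s_i})$ are real polynomials in $x=(x_1,\dots,x_N)\in\mathbb{R}^n$, $n=n_1+\cdots+n_N$. Let $\{x^{(k)}\}$ be a sequence produced by the following Gauss–Seidel scheme: start from a feasible point $x^{(0)}$ and a parameter $\tau^{(0)}>0$; for $k=0,1,2,\dots$ and $i=1,\dots,N$ in order, let $x_i^{(k+1)}$ be a global minimizer of \[ \min_{x_i\in\mathbb{R}^{n_i}}\ f_i(x_1^{(k+1)},\dots,x_{i-1}^{(k+1)},x_i,x_{i+1}^{(k)},\dots,x_N^{(k)})+\tau^{(k)}\|x_i-x_i^{(k)}\|^2 \] subject to $g_i(x_1^{(k+1)},\dots,x_{i-1}^{(k+1)},x_i,x_{i+1}^{(k)},\dots,x_N^{(k)})\ge 0$; then choose $\tau^{(k+1)}\in[0,\tau^{(k)}]$ and set $x^{(k+1)}=(x_1^{(k+1)},\dots,x_N^{(k+1)})$. Assume $x^{(k)}\to x^*$ and $\tau^{(k)}\to 0$. If for each $i$ the set-valued map $G_i: x_{-i}\mapsto X_i(x_{-i})$ is inner semicontinuous relative to its domain $\operatorname{dom}G_i$, then $x^*$ is a generalized Nash equilibrium of the problem.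
   Context: For $x=(x_1,\dots,x_N)$, $x_{-i}$ denotes $(x_1,\dots,x_{i-1},x_{i+1},\dots,x_N)$ and $(y,x_{-i})$ denotes the vector whose $i$th block is $y$ and other blocks are those of $x_{-i}$. The feasible set of player $i$ is $X_i(x_{-i})=\{x_i\in\mathbb{R}^{n_i}: g_i(x_i,x_{-i})\ge 0\}$ (componentwise inequality). A generalized Nash equilibrium (GNE) is a point $x$ such that for each $i$, $x_i$ is a minimizer of player $i$'s problem with $x_{-i}$ fixed. The domain of $G_i$ is the set of $x_{-i}$ with $X_i(x_{-i})\neq\emptyset$. A set-valued map $G$ is inner semicontinuous at $z\in\operatorname{dom}G$ relative to $\operatorname{dom}G$ if for every $w\in G(z)$ and every sequence $z_\ell\in\operatorname{dom}G$ with $z_\ell\to z$ there exist $w_\ell\in G(z_\ell)$ with $w_\ell\to w$; it is inner semicontinuous relative to $\operatorname{dom}G$ if this holds at all points of $\operatorname{dom}G$. *)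

theory Defs
  imports "HOL-Analysis.Analysis"
begin

text \<open>The whole strategy profile x = (x_1,...,x_N) is a point of real^'n (n = CARD('n)).
  The coordinates are partitioned into player blocks by blk :: 'n => nat, coordinate c
  belonging to player blk c (players are 0,...,N-1). A point of R^{n_i} is represented
  by a vector of real^'n supported on block i, and x_{-i} by a vector vanishing on block i.\<close>

inductive poly_fun :: "(real^'n \<Rightarrow> real) \<Rightarrow> bool" where
  poly_const: "poly_fun (\<lambda>x. c)"
| poly_coord: "poly_fun (\<lambda>x. x $ k)"
| poly_add: "poly_fun p \<Longrightarrow> poly_fun q \<Longrightarrow> poly_fun (\<lambda>x. p x + q x)"
| poly_mult: "poly_fun p \<Longrightarrow> poly_fun q \<Longrightarrow> poly_fun (\<lambda>x. p x * q x)"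

definition blk_part :: "('n \<Rightarrow> nat) \<Rightarrow> nat \<Rightarrow> real^'n \<Rightarrow> real^'n" where
  "blk_part blk i x = (\<chi> c. if blk c = i then x $ c else 0)"

definition blk_rest :: "('n \<Rightarrow> nat) \<Rightarrow> nat \<Rightarrow> real^'n \<Rightarrow> real^'n" where
  "blk_rest blk i x = (\<chi> c. if blk c = i then 0 else x $ c)"

text \<open>Feasible set X_i(x_{-i}) of player i; z plays the role of x_{-i}; the point (y,x_{-i}) is y + z.\<close>
definition feas_set ::
  "('n \<Rightarrow> nat) \<Rightarrow> (nat \<Rightarrow> nat) \<Rightarrow> (nat \<Rightarrow> nat \<Rightarrow> real^'n \<Rightarrow> real) \<Rightarrow> nat \<Rightarrow> real^'n \<Rightarrow> (real^'n) set"
  where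
  "feas_set blk s g i z = {y. blk_part blk i y = y \<and> (\<forall>j<s i. g i j (y + z) \<ge> 0)}"

definition dom_G ::
  "('n \<Rightarrow> nat) \<Rightarrow> (nat \<Rightarrow> nat) \<Rightarrow> (nat \<Rightarrow> nat \<Rightarrow> real^'n \<Rightarrow> real) \<Rightarrow> nat \<Rightarrow> (real^'n) set"
  where
  "dom_G blk s g i = {z. blk_rest blk i z = z \<and> feas_set blk s g i z \<noteq> {}}"

definition inner_semicont_rel ::
  "('a::topological_space \<Rightarrow> 'b::topological_space set) \<Rightarrow> 'a set \<Rightarrow> bool" where
  "inner_semicont_rel G D \<longleftrightarrow>
     (\<forall>z\<in>D. \<forall>w\<in>G z. \<forall>zs. (\<forall>l. zs l \<in> D) \<and> zs \<longlonglongrightarrow> z \<longrightarrow>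
        (\<exists>ws. (\<forall>l. ws l \<in> G (zs l)) \<and> ws \<longlonglongrightarrow> w))"

definition is_GNE ::
  "nat \<Rightarrow> ('n \<Rightarrow> nat) \<Rightarrow> (nat \<Rightarrow> real^'n \<Rightarrow> real) \<Rightarrow> (nat \<Rightarrow> nat) \<Rightarrow>
   (nat \<Rightarrow> nat \<Rightarrow> real^'n \<Rightarrow> real) \<Rightarrow> real^'n \<Rightarrow> bool" where
  "is_GNE N blk f s g x \<longleftrightarrow>
     (\<forall>i<N. blk_part blk i x \<in> feas_set blk s g i (blk_rest blk i x) \<and>
        (\<forall>y\<in>feas_set blk s g i (blk_rest blk i x).
            f i x \<le> f i (y + blk_rest blk i x)))"

definition gs_point :: "('n \<Rightarrow> nat) \<Rightarrow> (nat \<Rightarrow> real^'n) \<Rightarrow> nat \<Rightarrow> nat \<Rightarrow> real^'n" where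
  "gs_point blk xs k i = (\<chi> c. if blk c < i then xs (Suc k) $ c else xs k $ c)"

end

theory Submission
  imports Defs
begin

lemma poly_fun_cont: "poly_fun p \<Longrightarrow> continuous_on UNIV p"
  by (induction rule: poly_fun.induct) (auto intro!: continuous_intros)

lemma poly_fun_tendsto:
  assumes "poly_fun p" "(X \<longlongrightarrow> L) F"
  shows "((\<lambda>k. p (X k)) \<longlongrightarrow> p L) F"
  using poly_fun_cont[OF assms(1)] assms(2)
  by (metis UNIV_I continuous_on_def open_UNIV tendsto_at_iff_tendsto_nhds
        tendsto_compose at_within_open)

lemma blk_part_tendsto:
  assumes "(X \<longlongrightarrow> L) F"
  shows "((\<lambda>k. blk_part blk i (X k)) \<longlongrightarrow> blk_part blk i L) F"
  unfolding blk_part_def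
  by (rule tendsto_vec_lambda) (auto intro: tendsto_vec_nth[OF assms])

lemma blk_rest_tendsto:
  assumes "(X \<longlongrightarrow> L) F"
  shows "((\<lambda>k. blk_rest blk i (X k)) \<longlongrightarrow> blk_rest blk i L) F"
  unfolding blk_rest_def
  by (rule tendsto_vec_lambda) (auto intro: tendsto_vec_nth[OF assms])

lemma part_rest: "blk_part blk i x + blk_rest blk i x = x"
  by (simp add: blk_part_def blk_rest_def vec_eq_iff)

lemma part_part: "blk_part blk i (blk_part blk i x) = blk_part blk i x"
  by (simp add: blk_part_def vec_eq_iff)

lemma rest_rest: "blk_rest blk i (blk_rest blk i x) = blk_rest blk i x"
  by (simp add: blk_rest_def vec_eq_iff)

theorem theorem3p7:
  fixes N :: nat
    and blk :: "'n::finite \<Rightarrow> nat"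
    and f :: "nat \<Rightarrow> real^'n \<Rightarrow> real"
    and s :: "nat \<Rightarrow> nat"
    and g :: "nat \<Rightarrow> nat \<Rightarrow> real^'n \<Rightarrow> real"
    and xs :: "nat \<Rightarrow> real^'n"
    and \<tau> :: "nat \<Rightarrow> real"
    and xstar :: "real^'n"
  assumes blk_range: "\<forall>c. blk c < N"
    and f_poly: "\<forall>i<N. poly_fun (f i)"
    and g_poly: "\<forall>i<N. \<forall>j<s i. poly_fun (g i j)"
    and x0_feas: "\<forall>i<N. \<forall>j<s i. g i j (xs 0) \<ge> 0"
    and tau0: "\<tau> 0 > 0"
    and tau_step: "\<forall>k. 0 \<le> \<tau> (Suc k) \<and> \<tau> (Suc k) \<le> \<tau> k"
    and gs_min: "\<forall>k. \<forall>i<N.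
        blk_part blk i (xs (Suc k)) \<in> feas_set blk s g i (blk_rest blk i (gs_point blk xs k i)) \<and>
        (\<forall>y\<in>feas_set blk s g i (blk_rest blk i (gs_point blk xs k i)).
           f i (blk_part blk i (xs (Suc k)) + blk_rest blk i (gs_point blk xs k i))
             + \<tau> k * (norm (blk_part blk i (xs (Suc k)) - blk_part blk i (xs k)))\<^sup>2
           \<le> f i (y + blk_rest blk i (gs_point blk xs k i))
             + \<tau> k * (norm (y - blk_part blk i (xs k)))\<^sup>2)"
    and x_conv: "xs \<longlonglongrightarrow> xstar"
    and tau_conv: "\<tau> \<longlonglongrightarrow> 0"
    and isc: "\<forall>i<N. inner_semicont_rel (feas_set blk s g i) (dom_G blk s g i)"
  shows "is_GNE N blk f s g xstar"
  unfolding is_GNE_def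
proof (intro allI impI conjI ballI)
  fix i assume iN: "i < N"
  have tpos: "\<tau> k \<ge> 0" for k using tau0 tau_step by (cases k) auto
  define z where "z k = blk_rest blk i (gs_point blk xs k i)" for k
  define w where "w k = blk_part blk i (xs (Suc k))" for k
  have xsS: "(\<lambda>k. xs (Suc k)) \<longlonglongrightarrow> xstar" using x_conv by (rule LIMSEQ_Suc)
  have gsc: "(\<lambda>k. gs_point blk xs k i) \<longlonglongrightarrow> xstar"
  proof -
    have "(\<lambda>k. \<chi> c. if blk c < i then xs (Suc k) $ c else xs k $ c) \<longlonglongrightarrow> (\<chi> c. xstar $ c)"
    proof (rule tendsto_vec_lambda)
      fix c show "(\<lambda>k. if blk c < i then xs (Suc k) $ c else xs k $ c) \<longlonglongrightarrow> xstar $ c"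
        by (cases "blk c < i") (simp_all add: tendsto_vec_nth[OF xsS] tendsto_vec_nth[OF x_conv])
    qed
    then show ?thesis unfolding gs_point_def by simp
  qed
  have zc: "z \<longlonglongrightarrow> blk_rest blk i xstar"
    unfolding z_def by (rule blk_rest_tendsto[OF gsc])
  have wc: "w \<longlonglongrightarrow> blk_part blk i xstar"
    unfolding w_def by (rule blk_part_tendsto[OF xsS])
  have wz: "(\<lambda>k. w k + z k) \<longlonglongrightarrow> xstar"
    using tendsto_add[OF wc zc] by (simp add: part_rest)
  have wfeas: "w k \<in> feas_set blk s g i (z k)" for k
    using gs_min iN unfolding w_def z_def by blast
  have feas: "blk_part blk i xstar \<in> feas_set blk s g i (blk_rest blk i xstar)"
    unfolding feas_set_def
  proof (intro CollectI conjI allI impI)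
    show "blk_part blk i (blk_part blk i xstar) = blk_part blk i xstar" by (rule part_part)
    fix j assume j: "j < s i"
    have "((\<lambda>k. g i j (w k + z k)) \<longlongrightarrow> g i j xstar) sequentially"
      using poly_fun_tendsto[OF _ wz] g_poly iN j by blast
    moreover have "\<forall>k. g i j (w k + z k) \<ge> 0" using wfeas j unfolding feas_set_def by blast
    ultimately have "g i j xstar \<ge> 0"
      by (intro LIMSEQ_le_const) auto
    then show "g i j (blk_part blk i xstar + blk_rest blk i xstar) \<ge> 0" by (simp add: part_rest)
  qed
  then show "blk_part blk i xstar \<in> feas_set blk s g i (blk_rest blk i xstar)" .
  fix y assume y: "y \<in> feas_set blk s g i (blk_rest blk i xstar)"
  have zdom: "z k \<in> dom_G blk s g i" for k
    using wfeas[of k] unfolding dom_G_def z_def by (auto simp: rest_rest)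
  have zsdom: "blk_rest blk i xstar \<in> dom_G blk s g i"
    using feas unfolding dom_G_def by (auto simp: rest_rest)
  obtain ws where ws: "\<forall>l. ws l \<in> feas_set blk s g i (z l)" and wsc: "ws \<longlonglongrightarrow> y"
    using isc iN zsdom y zdom zc unfolding inner_semicont_rel_def by blast
  have ineq: "f i (w k + z k) \<le> f i (ws k + z k) + \<tau> k * (norm (ws k - blk_part blk i (xs k)))\<^sup>2" for k
  proof -
    have "f i (w k + z k) + \<tau> k * (norm (w k - blk_part blk i (xs k)))\<^sup>2
        \<le> f i (ws k + z k) + \<tau> k * (norm (ws k - blk_part blk i (xs k)))\<^sup>2"
      using gs_min iN ws unfolding w_def z_def by blast
    moreover have "\<tau> k * (norm (w k - blk_part blk i (xs k)))\<^sup>2 \<ge> 0" using tpos by simp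
    ultimately show ?thesis by linarith
  qed
  have l1: "(\<lambda>k. f i (w k + z k)) \<longlonglongrightarrow> f i xstar"
    using poly_fun_tendsto[OF _ wz] f_poly iN by blast
  have l2: "(\<lambda>k. f i (ws k + z k) + \<tau> k * (norm (ws k - blk_part blk i (xs k)))\<^sup>2)
      \<longlonglongrightarrow> f i (y + blk_rest blk i xstar) + 0 * (norm (y - blk_part blk i xstar))\<^sup>2"
  proof (rule tendsto_add)
    show "(\<lambda>k. f i (ws k + z k)) \<longlonglongrightarrow> f i (y + blk_rest blk i xstar)"
      using poly_fun_tendsto[OF _ tendsto_add[OF wsc zc]] f_poly iN by blast
    have "(\<lambda>k. ws k - blk_part blk i (xs k)) \<longlonglongrightarrow> y - blk_part blk i xstar"
      by (rule tendsto_diff[OF wsc blk_part_tendsto[OF x_conv]])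
    then have "(\<lambda>k. (norm (ws k - blk_part blk i (xs k)))\<^sup>2) \<longlonglongrightarrow> (norm (y - blk_part blk i xstar))\<^sup>2"
      by (intro tendsto_power tendsto_norm)
    then show "(\<lambda>k. \<tau> k * (norm (ws k - blk_part blk i (xs k)))\<^sup>2) \<longlonglongrightarrow> 0 * (norm (y - blk_part blk i xstar))\<^sup>2"
      by (rule tendsto_mult[OF tau_conv])
  qed
  show "f i xstar \<le> f i (y + blk_rest blk i xstar)"
    using LIMSEQ_le[OF l1 l2] ineq by auto
qed

end
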